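(* Let $n$ be a positive integer and $g=3n+2$. If $G$ is a pure $(2n+1)$-sparse gapset of genus $g$, then $G$ is not symmetric.
   Context: A gapset is a finite set $G\subset\mathbb{N}=\{1,2,\dots\}$ such that whenever $z\in G$ and $z=x+y$ with $x,y\in\mathbb{N}$, then $x\in G$ or $y\in G$; its genus is $g=\#G$. Writing $G=\{\ell_1<\dots<\ell_g\}$, the Frobenius number is $F(G)=\ell_g$; $G$ is symmetric if $F(G)=2g-1$. $G$ is pure $\kappa$-sparse if $\ell_{i+1}-\ell_i\le\kappa$ for all $i$ with equality for some $i$. *)

theory Defs
  imports Main
begin

definition gapset :: "nat set \<Rightarrow> bool" where
  "gapset G \<longleftrightarrow> finite G \<and> 0 \<notin> G \<and>
     (\<forall>z\<in>G. \<forall>x y. x \<ge> 1 \<and> y \<ge> 1 \<and> z = x + y \<longrightarrow> x \<in> G \<or> y \<in> G)"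

definition genus :: "nat set \<Rightarrow> nat" where
  "genus G = card G"

definition frobenius :: "nat set \<Rightarrow> nat" where
  "frobenius G = Max G"

definition symmetric_gapset :: "nat set \<Rightarrow> bool" where
  "symmetric_gapset G \<longleftrightarrow> frobenius G = 2 * genus G - 1"

definition pure_sparse :: "nat \<Rightarrow> nat set \<Rightarrow> bool" where
  "pure_sparse \<kappa> G \<longleftrightarrow>
     (let l = sorted_list_of_set G in
       (\<forall>i. i + 1 < length l \<longrightarrow> l ! (i+1) - l ! i \<le> \<kappa>) \<and>
       (\<exists>i. i + 1 < length l \<and> l ! (i+1) - l ! i = \<kappa>))"

end

theory Submission
  imports Defs
begin

lemma closed:
  assumes "gapset G" "x \<notin> G" "y \<notin> G"
  shows "x + y \<notin> G"
proof
  assume h: "x + y \<in> G"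
  show False
  proof (cases "x = 0 \<or> y = 0")
    case True then show ?thesis using assms h by auto
  next
    case False
    then have "x \<ge> 1" "y \<ge> 1" by auto
    moreover have "\<forall>z\<in>G. \<forall>x y. 1 \<le> x \<and> 1 \<le> y \<and> z = x + y \<longrightarrow> x \<in> G \<or> y \<in> G"
      using assms(1) unfolding gapset_def by blast
    ultimately show ?thesis using assms(2,3) h by blast
  qed
qed

theorem mainTheorem8:
  fixes n :: nat and G :: "nat set"
  assumes "n \<ge> 1"
    and "gapset G"
    and "genus G = 3 * n + 2"
    and "pure_sparse (2 * n + 1) G"
  shows "\<not> symmetric_gapset G"
proof
  assume sym: "symmetric_gapset G"
  have fin: "finite G" and z: "0 \<notin> G" using assms(2) unfolding gapset_def by auto
  have cG: "card G = 3*n+2" using assms(3) unfolding genus_def by simp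
  hence ne: "G \<noteq> {}" by auto
  define F where "F = Max G"
  have FG: "F \<in> G" unfolding F_def using fin ne by simp
  have Fv: "F = 6*n+3" using sym cG unfolding symmetric_gapset_def frobenius_def genus_def F_def by simp
  have le: "\<And>x. x \<in> G \<Longrightarrow> x \<le> F" unfolding F_def using fin by simp
  have cl: "\<And>x y. x \<notin> G \<Longrightarrow> y \<notin> G \<Longrightarrow> x + y \<notin> G" using closed assms(2) by blast
  have easy: "\<And>x. x \<le> F \<Longrightarrow> x \<notin> G \<Longrightarrow> F - x \<in> G"
  proof -
    fix x assume "x \<le> F" "x \<notin> G"
    show "F - x \<in> G"
    proof (rule ccontr)
      assume "F - x \<notin> G"
      with cl[OF \<open>x \<notin> G\<close> this] \<open>x \<le> F\<close> FG show False by simp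
    qed
  qed
  define A where "A = {0..F} - G"
  have GF: "G \<subseteq> {0..F}" using le by auto
  have cA: "card A = card G"
    unfolding A_def using card_Diff_subset[OF fin GF] cG Fv by simp
  have injA: "inj_on (\<lambda>x. F - x) A" unfolding A_def inj_on_def by auto
  have imA: "(\<lambda>x. F - x) ` A \<subseteq> G" unfolding A_def using easy by auto
  have eqA: "(\<lambda>x. F - x) ` A = G"
    using card_subset_eq[OF fin imA] card_image[OF injA] cA by simp
  have hard: "\<And>y. y \<in> G \<Longrightarrow> F - y \<notin> G"
  proof -
    fix y assume "y \<in> G"
    then obtain x where "x \<in> A" "y = F - x" using eqA by blast
    then show "F - y \<notin> G" unfolding A_def by auto
  qed
  define l where "l = sorted_list_of_set G"
  obtain i where i: "i + 1 < length l" "l ! (i+1) - l ! i = 2*n+1"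
    using assms(4) unfolding pure_sparse_def l_def Let_def by blast
  have setl: "set l = G" unfolding l_def using fin by simp
  have ss: "sorted l" unfolding l_def by simp
  define p where "p = l ! i"
  define q where "q = l ! (i+1)"
  have pG: "p \<in> G" unfolding p_def using i setl by auto
  have qG: "q \<in> G" unfolding q_def using i setl by auto
  have pq: "q = p + 2*n+1" using i unfolding p_def q_def by simp
  have btw: "\<And>x. p < x \<Longrightarrow> x < q \<Longrightarrow> x \<notin> G"
  proof
    fix x assume h: "p < x" "x < q" "x \<in> G"
    then obtain k where k: "k < length l" "l ! k = x" using setl by (metis in_set_conv_nth)
    show False
    proof (cases "k \<le> i")
      case True
      then have "l ! k \<le> l ! i" using sorted_nth_mono[OF ss True] i by simp
      then show False using h k p_def by simp
    next
      case False
      then have "i + 1 \<le> k" by simp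
      then have "l ! (i+1) \<le> l ! k" using sorted_nth_mono[OF ss _ k(1)] by blast
      then show False using h k q_def by simp
    qed
  qed
  define a where "a = p + 1"
  have p1: "p \<ge> 1" using pG z by (cases p) auto
  have run: "\<And>j. j < 2*n \<Longrightarrow> a + j \<notin> G" using btw pq unfolding a_def by simp
  have qF: "a + 2*n \<le> F" using le[OF qG] pq a_def by simp
  have a1: "a \<ge> 2*n+1"
  proof (rule ccontr)
    assume "\<not> ?thesis"
    hence "2*n = a + (2*n - a)" "2*n - a < 2*n" using p1 a_def by auto
    hence "2*n \<notin> G" using run by metis
    moreover have "a \<notin> G" using run[of 0] assms(1) by simp
    ultimately have "a + 2*n \<notin> G" using cl by blast
    thus False using qG pq a_def by simp
  qed
  have aN: "a \<notin> G" using run[of 0] assms(1) by simp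
  have a2: "a \<ge> 3*n+2"
  proof (rule ccontr)
    assume "\<not> ?thesis"
    show False
    proof (cases "a = 2*n+1")
      case True
      have "a + a \<notin> G" using cl aN by blast
      hence "a + (a + a) \<notin> G" using cl aN by blast
      moreover have "a + (a + a) = F" using True Fv by simp
      ultimately show False using FG by simp
    next
      case False
      have "F - a \<in> G" using easy aN qF by simp
      moreover have "F - a = a + (F - 2*a)" "F - 2*a < 2*n" using False a1 \<open>\<not> a \<ge> 3*n+2\<close> Fv by auto
      ultimately show False using run by metis
    qed
  qed
  have b1: "a = 4*n+3"
  proof (rule ccontr)
    assume ne4: "a \<noteq> 4*n+3"
    define y where "y = 4*n+3-a"
    have y1: "y \<ge> 1" using ne4 qF Fv y_def by simp
    show False
    proof (cases "y \<in> G")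
      case True
      have "F - y = a + 2*n" using y_def qF Fv by simp
      thus False using hard[OF True] qG pq a_def by simp
    next
      case False
      have "y + y \<notin> G" using cl False by blast
      moreover have "a - 2*n - 3 < 2*n" using a2 ne4 qF Fv assms(1) by simp
      hence "a + (a - 2*n - 3) \<notin> G" using run by blast
      moreover have "F - (a + (a - 2*n - 3)) = y + y" using y_def a2 ne4 qF Fv assms(1) by simp
      moreover have "a + (a - 2*n - 3) \<le> F" using a2 ne4 qF Fv by simp
      ultimately show False using easy by metis
    qed
  qed
  have "F - p \<notin> G" using hard[OF pG] .
  moreover have "F - p = 2*n+1" using b1 a_def Fv by simp
  ultimately have m: "2*n+1 \<notin> G" by simp
  have "(2*n+1) + (2*n+1) \<notin> G" using cl m by blast
  hence "(2*n+1) + ((2*n+1) + (2*n+1)) \<notin> G" using cl m by blast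
  moreover have "(2*n+1) + ((2*n+1) + (2*n+1)) = F" using Fv by simp
  ultimately show False using FG by simp
qed

end
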